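(* Let $\Phi_1,\Phi_2$ be simple, stationary point processes on $\mathbb{R}^d$ such that $\Phi_1(B_O(r))\le_{uv}\Phi_2(B_O(r))$ for $r\ge0$. Then there exists $k_0\ge1$ such that for any bounded Borel $W\subset\mathbb{R}^d$: $\mathbb{E}\|C_k(\Phi_1,r)\cap W\|\ge\mathbb{E}\|C_k(\Phi_2,r)\cap W\|$ for all $1\le k\le k_0$, and $\mathbb{E}\|C_k(\Phi_1,r)\cap W\|\le\mathbb{E}\|C_k(\Phi_2,r)\cap W\|$ for all $k>k_0$.
   Context: $B_x(r)$ is the closed ball of radius $r$ centred at $x$, $O$ the origin, and $\|A\|$ the Lebesgue measure of $A$. The $k$-covered set is $C_k(\Phi,r)=\{x\in\mathbb{R}^d:\ x\in\bigcap_{i=1}^mB_{X_i}(r)$ for some $m\ge k$ and points $X_1,\dots,X_m\in\Phi\}$. Uniformly convex variable order: $X\le_{uv}Y$ if their densities (probability mass functions) $f,g$ satisfy $\mathrm{supp}(f)\subset\mathrm{supp}(g)$, $f/g$ is unimodal, and the distribution functions $F,G$ are not ordered (neither $F\le G$ nor $G\le F$ everywhere). *)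

theory Defs
  imports "HOL-Probability.Probability"
begin

text \<open>A simple point process on a Euclidean space 'e, given as a random set of points
  (simple: no multiplicities) on a probability space M, which is locally finite and
  measurable w.r.t. the usual sigma-algebra generated by the counting variables
  Phi(B), B bounded Borel.\<close>
definition simple_point_process :: "'a measure \<Rightarrow> ('a \<Rightarrow> 'e::euclidean_space set) \<Rightarrow> bool" where
  "simple_point_process M Phi \<longleftrightarrow> prob_space M \<and>
     (\<forall>\<omega>\<in>space M. \<forall>B. bounded B \<longrightarrow> finite (Phi \<omega> \<inter> B)) \<and>
     (\<forall>B. bounded B \<and> B \<in> sets borel \<longrightarrow>
          (\<lambda>\<omega>. card (Phi \<omega> \<inter> B)) \<in> measurable M (count_space UNIV))"

text \<open>Stationarity: all finite-dimensional distributions of the counts are invariant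
  under translation (Phi + x)(B) = Phi(B - x); equivalently the law of Phi + x is the law of Phi.\<close>
definition stationary_pp :: "'a measure \<Rightarrow> ('a \<Rightarrow> 'e::euclidean_space set) \<Rightarrow> bool" where
  "stationary_pp M Phi \<longleftrightarrow>
     (\<forall>(x::'e) (Bs::'e set list) (A::nat list set).
        (\<forall>B\<in>set Bs. bounded B \<and> B \<in> sets borel) \<longrightarrow>
        measure M {\<omega>\<in>space M. map (\<lambda>B. card (Phi \<omega> \<inter> B)) Bs \<in> A} =
        measure M {\<omega>\<in>space M. map (\<lambda>B. card ((\<lambda>p. p + x) ` Phi \<omega> \<inter> B)) Bs \<in> A})"

definition k_covered :: "'e::euclidean_space set \<Rightarrow> nat \<Rightarrow> real \<Rightarrow> 'e set" where
  "k_covered Phi k r = {x. \<exists>S. S \<subseteq> Phi \<and> finite S \<and> card S \<ge> k \<and> (\<forall>X\<in>S. x \<in> cball X r)}"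

definition unimodal_on :: "nat set \<Rightarrow> (nat \<Rightarrow> real) \<Rightarrow> bool" where
  "unimodal_on S h \<longleftrightarrow>
     (\<exists>m. \<forall>i\<in>S. \<forall>j\<in>S. (i \<le> j \<and> j \<le> m \<longrightarrow> h i \<le> h j) \<and> (m \<le> i \<and> i \<le> j \<longrightarrow> h j \<le> h i))
     \<or> mono_on S h"

definition uv_le :: "(nat \<Rightarrow> real) \<Rightarrow> (nat \<Rightarrow> real) \<Rightarrow> bool" where
  "uv_le f g \<longleftrightarrow>
     {n. f n \<noteq> 0} \<subseteq> {n. g n \<noteq> 0} \<and>
     unimodal_on {n. g n \<noteq> 0} (\<lambda>n. f n / g n) \<and>
     \<not> (\<forall>n. (\<Sum>i\<le>n. f i) \<le> (\<Sum>i\<le>n. g i)) \<and>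
     \<not> (\<forall>n. (\<Sum>i\<le>n. g i) \<le> (\<Sum>i\<le>n. f i))"

definition count_pmf :: "'a measure \<Rightarrow> ('a \<Rightarrow> 'e::euclidean_space set) \<Rightarrow> real \<Rightarrow> nat \<Rightarrow> real" where
  "count_pmf M Phi r n = measure M {\<omega>\<in>space M. card (Phi \<omega> \<inter> cball 0 r) = n}"

definition exp_cov_vol :: "'a measure \<Rightarrow> ('a \<Rightarrow> 'e::euclidean_space set) \<Rightarrow> nat \<Rightarrow> real \<Rightarrow> 'e set \<Rightarrow> ennreal" where
  "exp_cov_vol M Phi k r W = (\<integral>\<^sup>+ \<omega>. emeasure lebesgue (k_covered (Phi \<omega>) k r \<inter> W) \<partial>M)"

end

theory Submission
  imports Defs
begin


lemma no_pnp:
  fixes f g :: "nat \<Rightarrow> real"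
  assumes f0: "\<And>i. 0 \<le> f i" and g0: "\<And>i. 0 \<le> g i" and uv: "uv_le f g"
    and ij: "i < j" "j < l" and di: "f i > g i" and dj: "f j < g j" and dl: "f l > g l"
  shows False
proof -
  have sup: "{n. f n \<noteq> 0} \<subseteq> {n. g n \<noteq> 0}" and um: "unimodal_on {n. g n \<noteq> 0} (\<lambda>n. f n / g n)"
    using uv unfolding uv_le_def by auto
  have "f i \<noteq> 0" using di g0[of i] by linarith
  then have "g i \<noteq> 0" using sup by blast
  then have gi: "g i > 0" using g0[of i] by linarith
  have "f l \<noteq> 0" using dl g0[of l] by linarith
  then have "g l \<noteq> 0" using sup by blast
  then have gl: "g l > 0" using g0[of l] by linarith
  have gj: "g j > 0" using dj f0[of j] by linarith
  have hi: "f i / g i > 1" using gi di by simp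
  have hl: "f l / g l > 1" using gl dl by simp
  have hj: "f j / g j < 1" using gj dj by simp
  show False
    using um unfolding unimodal_on_def
  proof
    assume "\<exists>m. \<forall>i\<in>{n. g n \<noteq> 0}. \<forall>j\<in>{n. g n \<noteq> 0}. (i \<le> j \<and> j \<le> m \<longrightarrow> f i / g i \<le> f j / g j) \<and> (m \<le> i \<and> i \<le> j \<longrightarrow> f j / g j \<le> f i / g i)"
    then obtain m where m: "\<forall>i\<in>{n. g n \<noteq> 0}. \<forall>j\<in>{n. g n \<noteq> 0}. (i \<le> j \<and> j \<le> m \<longrightarrow> f i / g i \<le> f j / g j) \<and> (m \<le> i \<and> i \<le> j \<longrightarrow> f j / g j \<le> f i / g i)" by blast
    show False
    proof (cases "j \<le> m")
      case True
      with m gi gj ij have "f i / g i \<le> f j / g j" by auto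
      with hi hj show False by simp
    next
      case False
      with m gl gj ij have "f l / g l \<le> f j / g j" by auto
      with hl hj show False by simp
    qed
  next
    assume "mono_on {n. g n \<noteq> 0} (\<lambda>n. f n / g n)"
    then have "f i / g i \<le> f j / g j" using gi gj ij by (auto simp: mono_on_def)
    with hi hj show False by simp
  qed
qed

lemma comb:
  fixes f g :: "nat \<Rightarrow> real"
  assumes f0: "\<And>i. 0 \<le> f i" and g0: "\<And>i. 0 \<le> g i" and uv: "uv_le f g"
    and lim: "(\<lambda>n. (\<Sum>i\<le>n. f i) - (\<Sum>i\<le>n. g i)) \<longlonglongrightarrow> 0"
  shows "\<exists>k0\<ge>1. \<forall>n. (n < k0 \<longrightarrow> (\<Sum>i\<le>n. f i) \<le> (\<Sum>i\<le>n. g i)) \<and>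
                    (k0 \<le> n \<longrightarrow> (\<Sum>i\<le>n. g i) \<le> (\<Sum>i\<le>n. f i))"
proof -
  define c where "c n = (\<Sum>i\<le>n. f i) - (\<Sum>i\<le>n. g i)" for n
  have cS: "c (Suc n) = c n + (f (Suc n) - g (Suc n))" for n
    unfolding c_def by simp
  have mono_up: "c n \<le> c (n + m)" if "\<forall>j. n < j \<and> j \<le> n + m \<longrightarrow> f j \<ge> g j" for n m
    using that by (induction m) (auto simp: cS intro: order_trans)
  have mono_dn: "c (n + m) \<le> c n" if A: "\<forall>j>n. f j \<le> g j" for n m
  proof (induction m)
    case (Suc m)
    have "f (Suc (n + m)) \<le> g (Suc (n + m))" using A by simp
    then show ?case using Suc by (simp add: cS)
  qed simp
  have pos_ex: "\<exists>i\<le>n. f i > g i" if "c n > 0" for n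
  proof (rule ccontr)
    assume "\<not> ?thesis"
    then have "(\<Sum>i\<le>n. f i - g i) \<le> 0" by (intro sum_nonpos) auto
    with that show False by (simp add: c_def sum_subtractf)
  qed
  have c0: "c \<longlonglongrightarrow> 0" using lim unfolding c_def .
  have step2: False if "n < n'" "c n > 0" "c n' < 0" for n n'
  proof -
    obtain i where i: "i \<le> n" "f i > g i" using pos_ex[OF \<open>c n > 0\<close>] by blast
    have "\<exists>j. j > n \<and> j \<le> n' \<and> f j < g j"
    proof (rule ccontr)
      assume "\<not> ?thesis"
      then have "\<forall>j. n < j \<and> j \<le> n + (n' - n) \<longrightarrow> f j \<ge> g j"
        using \<open>n < n'\<close> by (auto simp: not_less)
      from mono_up[OF this] have "c n \<le> c n'" using \<open>n < n'\<close> by simp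
      then show False using \<open>c n > 0\<close> \<open>c n' < 0\<close> by simp
    qed
    then obtain j where j: "j > n" "j \<le> n'" "f j < g j" by blast
    have "\<exists>l. l > n' \<and> f l > g l"
    proof (rule ccontr)
      assume "\<not> ?thesis"
      then have A: "\<forall>j>n'. f j \<le> g j" using leD by (auto simp: not_less)
      have "eventually (\<lambda>m. c m > c n') sequentially"
        using order_tendstoD(1)[OF c0 \<open>c n' < 0\<close>] .
      then obtain N where N: "\<And>m. m \<ge> N \<Longrightarrow> c m > c n'" by (auto simp: eventually_sequentially)
      have "c (n' + N) > c n'" using N by simp
      with mono_dn[OF A, of N] show False by simp
    qed
    then obtain l where l: "l > n'" "f l > g l" by blast
    have "i < j" "j < l" using i j l by linarith+
    then show False using no_pnp[OF f0 g0 uv _ _ i(2) j(3) l(2)] by blast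
  qed
  have ex: "\<exists>n. c n > 0"
    using uv unfolding uv_le_def c_def by (auto simp: not_le)
  define k0 where "k0 = (LEAST n. c n > 0)"
  have k0: "c k0 > 0" unfolding k0_def using ex by (rule LeastI_ex)
  have below: "c n \<le> 0" if "n < k0" for n
    using not_less_Least[OF that[unfolded k0_def]] by simp
  have above: "c n \<ge> 0" if "k0 \<le> n" for n
  proof (cases "n = k0")
    case True then show ?thesis using k0 by simp
  next
    case False then have "k0 < n" using that by simp
    then show ?thesis using step2[of k0 n] k0 by (meson not_le)
  qed
  have "k0 \<noteq> 0"
  proof
    assume "k0 = 0"
    then have "\<forall>n. (\<Sum>i\<le>n. g i) \<le> (\<Sum>i\<le>n. f i)" using above by (simp add: c_def)
    with uv show False unfolding uv_le_def by blast
  qed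
  then show ?thesis using below above
    by (intro exI[of _ k0]) (auto simp: c_def)
qed



lemma kcov_iff:
  assumes "finite (P \<inter> cball x r)"
  shows "x \<in> k_covered P k r \<longleftrightarrow> k \<le> card (P \<inter> cball x r)"
proof
  assume "x \<in> k_covered P k r"
  then obtain S where S: "S \<subseteq> P" "finite S" "card S \<ge> k" "\<forall>X\<in>S. x \<in> cball X r"
    unfolding k_covered_def by blast
  have "S \<subseteq> P \<inter> cball x r" using S by (auto simp: dist_commute)
  then have "card S \<le> card (P \<inter> cball x r)" using assms by (rule card_mono[rotated])
  then show "k \<le> card (P \<inter> cball x r)" using S by simp
next
  assume "k \<le> card (P \<inter> cball x r)"
  then show "x \<in> k_covered P k r" unfolding k_covered_def using assms
    by (intro CollectI exI[of _ "P \<inter> cball x r"]) (auto simp: dist_commute)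
qed

lemma shrink:
  fixes x :: "'e::euclidean_space"
  assumes fin: "\<And>B. bounded B \<Longrightarrow> finite (P \<inter> B)"
    and all: "\<And>n::nat. k \<le> card (P \<inter> cball x (r + 2 / Suc n))"
  shows "k \<le> card (P \<inter> cball x r)"
proof -
  define F where "F = P \<inter> cball x (r + 2) - cball x r"
  have fF: "finite F" unfolding F_def using fin[of "cball x (r+2)"] by auto
  define \<delta> where "\<delta> = Min (insert (r + 2) (dist x ` F))"
  have "\<delta> > r" unfolding \<delta>_def using fF by (auto simp: F_def)
  have \<delta>le: "\<delta> \<le> dist x y" if "y \<in> F" for y
    unfolding \<delta>_def using fF that by (intro Min_le) auto
  obtain n where n: "inverse (real (Suc n)) < (\<delta> - r) / 2"
    using reals_Archimedean[of "(\<delta> - r) / 2"] \<open>\<delta> > r\<close> by auto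
  have n2: "2 / real (Suc n) < \<delta> - r" using n by (simp add: field_simps)
  have "2 / real (Suc n) \<le> 2" by (simp add: field_simps)
  have sub: "P \<inter> cball x (r + 2 / Suc n) \<subseteq> P \<inter> cball x r"
  proof
    fix y assume y: "y \<in> P \<inter> cball x (r + 2 / Suc n)"
    show "y \<in> P \<inter> cball x r"
    proof (rule ccontr)
      assume "y \<notin> P \<inter> cball x r"
      then have "y \<in> F" using y \<open>2 / real (Suc n) \<le> 2\<close> unfolding F_def by auto
      then have "\<delta> \<le> dist x y" by (rule \<delta>le)
      moreover have "dist x y \<le> r + 2 / Suc n" using y by auto
      ultimately show False using n2 by linarith
    qed
  qed
  have "card (P \<inter> cball x (r + 2 / Suc n)) \<le> card (P \<inter> cball x r)"
    using sub fin[of "cball x r"] by (intro card_mono) auto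
  then show ?thesis using all[of n] by linarith
qed

lemma pred_cover:
  fixes Phi :: "'a \<Rightarrow> 'e::euclidean_space set"
  assumes spp: "simple_point_process M Phi"
  shows "Measurable.pred (M \<Otimes>\<^sub>M lborel) (\<lambda>p. k \<le> card (Phi (fst p) \<inter> cball (snd p) r))"
proof -
  obtain D :: "'e set" where D: "countable D" "\<And>X. open X \<Longrightarrow> X \<noteq> {} \<Longrightarrow> \<exists>d\<in>D. d \<in> X"
    using countable_dense_setE by blast
  have "D \<noteq> {}" using D(2)[of UNIV] by auto
  define q where "q = from_nat_into D"
  have qD: "q i \<in> D" for i unfolding q_def using \<open>D \<noteq> {}\<close> by (rule from_nat_into)
  have Dq: "\<exists>i. q i = d" if "d \<in> D" for d
    unfolding q_def using D(1) that by (metis from_nat_into_to_nat_on)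
  have fin: "\<And>B. bounded B \<Longrightarrow> finite (Phi \<omega> \<inter> B)" if "\<omega> \<in> space M" for \<omega>
    using spp that unfolding simple_point_process_def by blast
  have cm: "(\<lambda>\<omega>. card (Phi \<omega> \<inter> B)) \<in> measurable M (count_space UNIV)" if "bounded B" "B \<in> sets borel" for B
    using spp that unfolding simple_point_process_def by blast
  have key: "k \<le> card (Phi \<omega> \<inter> cball x r) \<longleftrightarrow>
     (\<forall>n::nat. \<exists>i::nat. dist (q i) x < 1 / Suc n \<and> k \<le> card (Phi \<omega> \<inter> cball (q i) (r + 1 / Suc n)))"
    if \<omega>: "\<omega> \<in> space M" for \<omega> x
  proof
    assume k: "k \<le> card (Phi \<omega> \<inter> cball x r)"
    show "\<forall>n::nat. \<exists>i::nat. dist (q i) x < 1 / Suc n \<and> k \<le> card (Phi \<omega> \<inter> cball (q i) (r + 1 / Suc n))"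
    proof
      fix n :: nat
      have "ball x (1 / Suc n) \<noteq> {}" by auto
      then obtain d where d: "d \<in> D" "d \<in> ball x (1 / Suc n)" using D(2)[of "ball x (1 / Suc n)"] by auto
      then obtain i where i: "q i = d" using Dq by blast
      have dd: "dist (q i) x < 1 / Suc n" using d i by (simp add: dist_commute)
      have "cball x r \<subseteq> cball (q i) (r + 1 / Suc n)"
      proof
        fix y assume "y \<in> cball x r"
        then have "dist x y \<le> r" by simp
        moreover have "dist (q i) y \<le> dist (q i) x + dist x y" by (rule dist_triangle)
        ultimately show "y \<in> cball (q i) (r + 1 / Suc n)" using dd by simp
      qed
      then have "card (Phi \<omega> \<inter> cball x r) \<le> card (Phi \<omega> \<inter> cball (q i) (r + 1 / Suc n))"
        using fin[OF \<omega>, of "cball (q i) (r + 1 / Suc n)"] by (intro card_mono) auto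
      then show "\<exists>i::nat. dist (q i) x < 1 / Suc n \<and> k \<le> card (Phi \<omega> \<inter> cball (q i) (r + 1 / Suc n))"
        using dd k by (intro exI[of _ i]) simp
    qed
  next
    assume A: "\<forall>n::nat. \<exists>i::nat. dist (q i) x < 1 / Suc n \<and> k \<le> card (Phi \<omega> \<inter> cball (q i) (r + 1 / Suc n))"
    show "k \<le> card (Phi \<omega> \<inter> cball x r)"
    proof (rule shrink[OF fin[OF \<omega>]])
      fix n :: nat
      obtain i where i: "dist (q i) x < 1 / Suc n" "k \<le> card (Phi \<omega> \<inter> cball (q i) (r + 1 / Suc n))"
        using A by blast
      have "cball (q i) (r + 1 / Suc n) \<subseteq> cball x (r + 2 / Suc n)"
      proof
        fix y assume "y \<in> cball (q i) (r + 1 / Suc n)"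
        then have "dist (q i) y \<le> r + 1 / Suc n" by simp
        moreover have "dist x y \<le> dist x (q i) + dist (q i) y" by (rule dist_triangle)
        moreover have "dist x (q i) < 1 / Suc n" using i(1) by (simp add: dist_commute)
        moreover have "2 / real (Suc n) = 1 / Suc n + 1 / Suc n" by (simp add: field_simps)
        ultimately show "y \<in> cball x (r + 2 / Suc n)" unfolding mem_cball by linarith
      qed
      then have "card (Phi \<omega> \<inter> cball (q i) (r + 1 / Suc n)) \<le> card (Phi \<omega> \<inter> cball x (r + 2 / Suc n))"
        using fin[OF \<omega>, of "cball x (r + 2 / Suc n)"] by (intro card_mono) auto
      then show "k \<le> card (Phi \<omega> \<inter> cball x (r + 2 / real (Suc n)))" using i(2) by linarith
    qed auto
  qed
  have atom1: "Measurable.pred (M \<Otimes>\<^sub>M lborel) (\<lambda>p. k \<le> card (Phi (fst p) \<inter> cball c s))" for c s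
  proof -
    have "(\<lambda>p. card (Phi (fst p) \<inter> cball c s)) \<in> measurable (M \<Otimes>\<^sub>M lborel) (count_space UNIV)"
      using measurable_compose[OF measurable_fst cm[of "cball c s"]] by (simp add: o_def)
    from measurable_sets[OF this, of "{n. k \<le> n}"] show ?thesis unfolding pred_def
      by (simp add: vimage_def Int_def conj_commute)
  qed
  have atom2: "Measurable.pred (M \<Otimes>\<^sub>M lborel) (\<lambda>p. dist c (snd p) < e)" for c :: 'e and e :: real
    by measurable
  have P: "Measurable.pred (M \<Otimes>\<^sub>M lborel) (\<lambda>p. \<forall>n::nat. \<exists>i::nat. dist (q i) (snd p) < 1 / Suc n \<and> k \<le> card (Phi (fst p) \<inter> cball (q i) (r + 1 / Suc n)))"
    using atom1 atom2 by (intro pred_intros_countable pred_intros_logic) auto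
  have eq: "{p\<in>space (M \<Otimes>\<^sub>M lborel). k \<le> card (Phi (fst p) \<inter> cball (snd p) r)} =
    {p\<in>space (M \<Otimes>\<^sub>M lborel). \<forall>n::nat. \<exists>i::nat. dist (q i) (snd p) < 1 / Suc n \<and> k \<le> card (Phi (fst p) \<inter> cball (q i) (r + 1 / Suc n))}"
    using key by (auto simp: space_pair_measure)
  show ?thesis unfolding pred_def eq using P[unfolded pred_def] .
qed


lemma stat_shift:
  fixes Phi :: "'a \<Rightarrow> 'e::euclidean_space set"
  assumes st: "stationary_pp M Phi"
  shows "measure M {\<omega>\<in>space M. k \<le> card (Phi \<omega> \<inter> cball x r)} =
         measure M {\<omega>\<in>space M. k \<le> card (Phi \<omega> \<inter> cball 0 r)}"
proof -
  have S: "measure M {\<omega>\<in>space M. map (\<lambda>B. card (Phi \<omega> \<inter> B)) [cball 0 r] \<in> {[n] | n. k \<le> n}} =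
     measure M {\<omega>\<in>space M. map (\<lambda>B. card ((\<lambda>p. p + - x) ` Phi \<omega> \<inter> B)) [cball 0 r] \<in> {[n] | n. k \<le> n}}"
    using st[unfolded stationary_pp_def, rule_format, of "[cball 0 r]" "{[n] | n. k \<le> n}" "- x"] by simp
  have card_eq: "card ((\<lambda>p. p - x) ` P \<inter> cball 0 r) = card (P \<inter> cball x r)" for P
  proof -
    have "(\<lambda>p. p - x) ` P \<inter> cball 0 r = (\<lambda>p. p - x) ` (P \<inter> cball x r)"
      by (auto simp: dist_norm norm_minus_commute)
    moreover have "inj_on (\<lambda>p. p - x) (P \<inter> cball x r)" by (auto simp: inj_on_def)
    ultimately show ?thesis by (simp add: card_image)
  qed
  have S2: "measure M {\<omega>\<in>space M. k \<le> card (Phi \<omega> \<inter> cball 0 r)} =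
     measure M {\<omega>\<in>space M. k \<le> card ((\<lambda>p. p - x) ` Phi \<omega> \<inter> cball 0 r)}"
    using S by simp
  show ?thesis using S2 unfolding card_eq by simp
qed


lemma cnt_sets:
  fixes Phi :: "'a \<Rightarrow> 'e::euclidean_space set"
  assumes spp: "simple_point_process M Phi"
  shows "{\<omega>\<in>space M. P (card (Phi \<omega> \<inter> cball x r))} \<in> sets M"
proof -
  have "(\<lambda>\<omega>. card (Phi \<omega> \<inter> cball x r)) \<in> measurable M (count_space UNIV)"
    using spp unfolding simple_point_process_def by auto
  from measurable_sets[OF this, of "{n. P n}"] show ?thesis
    by (simp add: vimage_def Int_def conj_commute)
qed

lemma cdf:
  fixes Phi :: "'a \<Rightarrow> 'e::euclidean_space set"
  assumes spp: "simple_point_process M Phi"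
  shows "measure M {\<omega>\<in>space M. card (Phi \<omega> \<inter> cball 0 r) \<le> n} = (\<Sum>i\<le>n. count_pmf M Phi r i)"
proof (induction n)
  case 0
  then show ?case by (simp add: count_pmf_def)
next
  case (Suc n)
  interpret prob_space M using spp by (simp add: simple_point_process_def)
  have "{\<omega>\<in>space M. card (Phi \<omega> \<inter> cball 0 r) \<le> Suc n} =
        {\<omega>\<in>space M. card (Phi \<omega> \<inter> cball 0 r) \<le> n} \<union> {\<omega>\<in>space M. card (Phi \<omega> \<inter> cball 0 r) = Suc n}"
    by auto
  then have "measure M {\<omega>\<in>space M. card (Phi \<omega> \<inter> cball 0 r) \<le> Suc n} =
     measure M {\<omega>\<in>space M. card (Phi \<omega> \<inter> cball 0 r) \<le> n} + measure M {\<omega>\<in>space M. card (Phi \<omega> \<inter> cball 0 r) = Suc n}"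
  proof -
    have disj: "{\<omega>\<in>space M. card (Phi \<omega> \<inter> cball 0 r) \<le> n} \<inter> {\<omega>\<in>space M. card (Phi \<omega> \<inter> cball 0 r) = Suc n} = {}"
      by auto
    show ?thesis unfolding \<open>_ = _ \<union> _\<close>
      using finite_measure_Union[OF cnt_sets[OF spp, of "\<lambda>m. m \<le> n" 0 r] cnt_sets[OF spp, of "\<lambda>m. m = Suc n" 0 r] disj] .
  qed
  then show ?case using Suc by (simp add: count_pmf_def)
qed

lemma tail:
  fixes Phi :: "'a \<Rightarrow> 'e::euclidean_space set"
  assumes spp: "simple_point_process M Phi" and k: "1 \<le> k"
  shows "measure M {\<omega>\<in>space M. k \<le> card (Phi \<omega> \<inter> cball 0 r)} = 1 - (\<Sum>i\<le>k-1. count_pmf M Phi r i)"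
proof -
  interpret prob_space M using spp by (simp add: simple_point_process_def)
  have "{\<omega>\<in>space M. k \<le> card (Phi \<omega> \<inter> cball 0 r)} = space M - {\<omega>\<in>space M. card (Phi \<omega> \<inter> cball 0 r) \<le> k - 1}"
    using k by auto
  then show ?thesis using prob_compl[OF cnt_sets[OF spp, of "\<lambda>m. m \<le> k - 1" 0 r]] cdf[OF spp] by simp
qed

lemma cdf_lim:
  fixes Phi :: "'a \<Rightarrow> 'e::euclidean_space set"
  assumes spp: "simple_point_process M Phi"
  shows "(\<lambda>n. \<Sum>i\<le>n. count_pmf M Phi r i) \<longlonglongrightarrow> 1"
proof -
  interpret prob_space M using spp by (simp add: simple_point_process_def)
  define A where "A n = {\<omega>\<in>space M. card (Phi \<omega> \<inter> cball 0 r) \<le> n}" for n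
  have "range A \<subseteq> sets M" unfolding A_def using cnt_sets[OF spp] by auto
  moreover have "incseq A" unfolding A_def incseq_def by auto
  ultimately have "(\<lambda>n. measure M (A n)) \<longlonglongrightarrow> measure M (\<Union>n. A n)"
    by (rule finite_Lim_measure_incseq)
  moreover have "(\<Union>n. A n) = space M" unfolding A_def by auto
  ultimately show ?thesis using prob_space by (simp add: A_def cdf[OF spp])
qed

lemma ecv:
  fixes Phi :: "'a \<Rightarrow> 'e::euclidean_space set"
  assumes spp: "simple_point_process M Phi" and st: "stationary_pp M Phi" and W: "W \<in> sets borel"
  shows "exp_cov_vol M Phi k r W =
    ennreal (measure M {\<omega>\<in>space M. k \<le> card (Phi \<omega> \<inter> cball 0 r)}) * emeasure lborel W"
proof -
  interpret prob_space M using spp by (simp add: simple_point_process_def)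
  interpret pair_sigma_finite M lborel
    by (simp add: pair_sigma_finite_def sigma_finite_measure_axioms lborel.sigma_finite_measure_axioms)
  define p where "p = measure M {\<omega>\<in>space M. k \<le> card (Phi \<omega> \<inter> cball 0 r)}"
  define Q where "Q \<omega> x \<longleftrightarrow> k \<le> card (Phi \<omega> \<inter> cball x r) \<and> x \<in> W" for \<omega> x
  have fin: "\<And>B. bounded B \<Longrightarrow> finite (Phi \<omega> \<inter> B)" if "\<omega> \<in> space M" for \<omega>
    using spp that unfolding simple_point_process_def by blast
  have Wp: "Measurable.pred (M \<Otimes>\<^sub>M lborel) (\<lambda>p. snd p \<in> W)" using W by measurable
  have Qp: "Measurable.pred (M \<Otimes>\<^sub>M lborel) (\<lambda>p. Q (fst p) (snd p))"
    unfolding Q_def using pred_cover[OF spp] Wp by (intro pred_intros_logic)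
  define f :: "'a \<Rightarrow> 'e \<Rightarrow> ennreal" where "f \<omega> x = indicator (Collect (Q \<omega>)) x" for \<omega> x
  have fm: "case_prod f \<in> borel_measurable (M \<Otimes>\<^sub>M lborel)"
  proof -
    have "case_prod f = (\<lambda>p. if Q (fst p) (snd p) then 1 else 0)"
      by (auto simp: f_def fun_eq_iff indicator_def)
    moreover have "(\<lambda>p. if Q (fst p) (snd p) then 1 else (0::ennreal)) \<in> borel_measurable (M \<Otimes>\<^sub>M lborel)"
      using Qp by (intro measurable_If) (auto simp: pred_def)
    ultimately show ?thesis by simp
  qed
  have FB: "(\<integral>\<^sup>+ x. (\<integral>\<^sup>+ \<omega>. f \<omega> x \<partial>M) \<partial>lborel) = (\<integral>\<^sup>+ \<omega>. (\<integral>\<^sup>+ x. f \<omega> x \<partial>lborel) \<partial>M)"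
    by (rule Fubini'[OF fm])
  have L: "(\<integral>\<^sup>+ x. f \<omega> x \<partial>lborel) = emeasure lebesgue (k_covered (Phi \<omega>) k r \<inter> W)"
    if \<omega>: "\<omega> \<in> space M" for \<omega>
  proof -
    have QS: "{p\<in>space (M \<Otimes>\<^sub>M lborel). Q (fst p) (snd p)} \<in> sets (M \<Otimes>\<^sub>M lborel)"
      using Qp by (simp add: pred_def)
    have eq1: "Pair \<omega> -` {p\<in>space (M \<Otimes>\<^sub>M lborel). Q (fst p) (snd p)} = Collect (Q \<omega>)"
      using \<omega> by (auto simp: space_pair_measure)
    have CS: "Collect (Q \<omega>) \<in> sets lborel" using sets_Pair1[OF QS, of \<omega>] unfolding eq1 .
    have eq2: "k_covered (Phi \<omega>) k r \<inter> W = Collect (Q \<omega>)"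
      using kcov_iff[OF fin[OF \<omega>]] by (auto simp: Q_def)
    have "(\<integral>\<^sup>+ x. f \<omega> x \<partial>lborel) = emeasure lborel (Collect (Q \<omega>))"
      unfolding f_def using CS by (rule nn_integral_indicator)
    also have "\<dots> = emeasure lebesgue (Collect (Q \<omega>))"
      using CS by (simp add: emeasure_completion main_part_sets)
    finally show ?thesis unfolding eq2 .
  qed
  have R: "(\<integral>\<^sup>+ \<omega>. f \<omega> x \<partial>M) = ennreal p * indicator W x" for x
  proof -
    define E where "E = {\<omega>\<in>space M. k \<le> card (Phi \<omega> \<inter> cball x r)}"
    have ES: "E \<in> sets M" unfolding E_def by (rule cnt_sets[OF spp])
    have "(\<integral>\<^sup>+ \<omega>. f \<omega> x \<partial>M) = (\<integral>\<^sup>+ \<omega>. indicator W x * indicator E \<omega> \<partial>M)"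
      by (intro nn_integral_cong) (auto simp: f_def E_def Q_def indicator_def)
    also have "\<dots> = indicator W x * emeasure M E" using ES by (rule nn_integral_cmult_indicator)
    also have "\<dots> = indicator W x * ennreal p"
      unfolding emeasure_eq_measure E_def p_def by (subst stat_shift[OF st]) (rule refl)
    finally show ?thesis by (simp add: mult.commute)
  qed
  have "exp_cov_vol M Phi k r W = (\<integral>\<^sup>+ \<omega>. (\<integral>\<^sup>+ x. f \<omega> x \<partial>lborel) \<partial>M)"
    unfolding exp_cov_vol_def by (intro nn_integral_cong) (simp add: L)
  also have "\<dots> = (\<integral>\<^sup>+ x. ennreal p * indicator W x \<partial>lborel)" unfolding FB[symmetric] R ..
  also have "\<dots> = ennreal p * emeasure lborel W" using W by (intro nn_integral_cmult_indicator) simp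
  finally show ?thesis unfolding p_def .
qed


theorem proposition6p4:
  fixes M1 :: "'a measure" and M2 :: "'b measure"
    and Phi1 :: "'a \<Rightarrow> 'e::euclidean_space set" and Phi2 :: "'b \<Rightarrow> 'e set"
  assumes "simple_point_process M1 Phi1" "stationary_pp M1 Phi1"
    and "simple_point_process M2 Phi2" "stationary_pp M2 Phi2"
    and "\<forall>r>0. uv_le (count_pmf M1 Phi1 r) (count_pmf M2 Phi2 r)"
  shows "\<forall>r>0. \<exists>k0\<ge>1. \<forall>W. bounded W \<and> W \<in> sets borel \<longrightarrow>
           (\<forall>k. 1 \<le> k \<and> k \<le> k0 \<longrightarrow> exp_cov_vol M1 Phi1 k r W \<ge> exp_cov_vol M2 Phi2 k r W) \<and>
           (\<forall>k>k0. exp_cov_vol M1 Phi1 k r W \<le> exp_cov_vol M2 Phi2 k r W)"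
proof (intro allI impI)
  fix r :: real assume "r > 0"
  note spp1 = assms(1) and st1 = assms(2) and spp2 = assms(3) and st2 = assms(4)
  define f where "f = count_pmf M1 Phi1 r"
  define g where "g = count_pmf M2 Phi2 r"
  have uv: "uv_le f g" using assms(5) \<open>r > 0\<close> by (simp add: f_def g_def)
  have f0: "0 \<le> f i" for i by (simp add: f_def count_pmf_def)
  have g0: "0 \<le> g i" for i by (simp add: g_def count_pmf_def)
  have lim: "(\<lambda>n. (\<Sum>i\<le>n. f i) - (\<Sum>i\<le>n. g i)) \<longlonglongrightarrow> 0"
    using tendsto_diff[OF cdf_lim[OF spp1, of r] cdf_lim[OF spp2, of r]] by (simp add: f_def g_def)
  obtain k0 where k0: "k0 \<ge> 1" and
    P: "\<And>n. (n < k0 \<longrightarrow> (\<Sum>i\<le>n. f i) \<le> (\<Sum>i\<le>n. g i)) \<and> (k0 \<le> n \<longrightarrow> (\<Sum>i\<le>n. g i) \<le> (\<Sum>i\<le>n. f i))"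
    using comb[OF f0 g0 uv lim] by blast
  have E1: "exp_cov_vol M1 Phi1 k r W = ennreal (1 - (\<Sum>i\<le>k-1. f i)) * emeasure lborel W"
    if "1 \<le> k" "W \<in> sets borel" for k W
    using ecv[OF spp1 st1 that(2), of k r] tail[OF spp1 that(1), of r] by (simp add: f_def)
  have E2: "exp_cov_vol M2 Phi2 k r W = ennreal (1 - (\<Sum>i\<le>k-1. g i)) * emeasure lborel W"
    if "1 \<le> k" "W \<in> sets borel" for k W
    using ecv[OF spp2 st2 that(2), of k r] tail[OF spp2 that(1), of r] by (simp add: g_def)
  show "\<exists>k0\<ge>1. \<forall>W. bounded W \<and> W \<in> sets borel \<longrightarrow>
           (\<forall>k. 1 \<le> k \<and> k \<le> k0 \<longrightarrow> exp_cov_vol M1 Phi1 k r W \<ge> exp_cov_vol M2 Phi2 k r W) \<and>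
           (\<forall>k>k0. exp_cov_vol M1 Phi1 k r W \<le> exp_cov_vol M2 Phi2 k r W)"
  proof (intro exI[of _ k0] conjI k0 allI impI)
    fix W :: "'e set" and k :: nat
    assume W: "bounded W \<and> W \<in> sets borel" and k: "1 \<le> k \<and> k \<le> k0"
    then have "(\<Sum>i\<le>k-1. f i) \<le> (\<Sum>i\<le>k-1. g i)" using P[of "k-1"] by auto
    then have "ennreal (1 - (\<Sum>i\<le>k-1. g i)) \<le> ennreal (1 - (\<Sum>i\<le>k-1. f i))"
      by (intro ennreal_leI) simp
    then show "exp_cov_vol M2 Phi2 k r W \<le> exp_cov_vol M1 Phi1 k r W"
      using k W by (simp add: E1 E2 mult_right_mono)
  next
    fix W :: "'e set" and k :: nat
    assume W: "bounded W \<and> W \<in> sets borel" and k: "k0 < k"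
    then have "(\<Sum>i\<le>k-1. g i) \<le> (\<Sum>i\<le>k-1. f i)" using P[of "k-1"] by auto
    then have "ennreal (1 - (\<Sum>i\<le>k-1. f i)) \<le> ennreal (1 - (\<Sum>i\<le>k-1. g i))"
      by (intro ennreal_leI) simp
    moreover have "1 \<le> k" using k k0 by simp
    ultimately show "exp_cov_vol M1 Phi1 k r W \<le> exp_cov_vol M2 Phi2 k r W"
      using W by (simp add: E1 E2 mult_right_mono)
  qed
qed

end
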